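(* Let $m\geq 1$, $n\geq 3$, and let $k,r\in\{1,\ldots,m\}$ with $k\neq r$. There exists a walk of length $n-1$ in $D^m_n$ from a vertex $i\in V^k\setminus\{1\}$ to a vertex $j\in V^r\setminus\{1\}$ if and only if there exists $\ell\in\{3,\ldots,n\}$ such that $i=(k-1)(n-1)+\ell$ and $j=(r-1)(n-1)+(\ell-1)$. Moreover, in such cases this walk is unique.
   Context: For integers $m\geq 1$, $n\geq 3$, the oriented Dutch windmill graph $D^m_n$ is the directed graph with vertex set $V=\{1,2,\ldots,m(n-1)+1\}$ whose directed edges $(a,b)$ are exactly: $(1,(k-1)(n-1)+2)$ for $k\in\{1,\ldots,m\}$; $((k-1)(n-1)+i,(k-1)(n-1)+i+1)$ for $k\in\{1,\ldots,m\}$ and $i\in\{2,\ldots,n-1\}$; and $((k-1)(n-1)+n,1)$ for $k\in\{1,\ldots,m\}$. For $k\in\{1,\ldots,m\}$, $V^k=\{1\}\cup\{(k-1)(n-1)+\ell:\ \ell=2,\ldots,n\}$. A walk is a sequence of vertices $\langle v_1,\ldots,v_r\rangle$ in which each $(v_t,v_{t+1})$ is an edge; its length is $r-1$. *)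

theory Defs
  imports Main
begin

definition dw_vertices :: "nat \<Rightarrow> nat \<Rightarrow> nat set" where
  "dw_vertices m n = {1 .. m * (n - 1) + 1}"

definition dw_edge :: "nat \<Rightarrow> nat \<Rightarrow> nat \<Rightarrow> nat \<Rightarrow> bool" where
  "dw_edge m n a b \<longleftrightarrow>
     (\<exists>k\<in>{1..m}. a = 1 \<and> b = (k - 1) * (n - 1) + 2)
   \<or> (\<exists>k\<in>{1..m}. \<exists>i\<in>{2..n - 1}. a = (k - 1) * (n - 1) + i \<and> b = (k - 1) * (n - 1) + i + 1)
   \<or> (\<exists>k\<in>{1..m}. a = (k - 1) * (n - 1) + n \<and> b = 1)"

definition dw_block :: "nat \<Rightarrow> nat \<Rightarrow> nat set" where
  "dw_block n k = {1} \<union> {(k - 1) * (n - 1) + l | l. l \<in> {2..n}}"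

text \<open>A walk is a nonempty vertex sequence with consecutive pairs being edges;
  its length is (number of vertices) - 1.\<close>
definition dw_walk :: "nat \<Rightarrow> nat \<Rightarrow> nat list \<Rightarrow> bool" where
  "dw_walk m n w \<longleftrightarrow> w \<noteq> [] \<and> set w \<subseteq> dw_vertices m n \<and>
     (\<forall>t. Suc t < length w \<longrightarrow> dw_edge m n (w ! t) (w ! Suc t))"

end

theory Submission
  imports Defs
begin

lemma L1:
  fixes n k k' l l' :: nat
  assumes "n \<ge> 3" "l \<in> {2..n}" "l' \<in> {2..n}"
    and "(k - 1) * (n - 1) + l = (k' - 1) * (n - 1) + l'"
  shows "k - 1 = k' - 1 \<and> l = l'"
proof -
  have *: "x < y \<Longrightarrow> x * (n - 1) + (n - 1) \<le> y * (n - 1)" for x y :: nat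
  proof -
    assume "x < y" then have "Suc x \<le> y" by simp
    then have "Suc x * (n - 1) \<le> y * (n - 1)" by (rule mult_le_mono1)
    then show ?thesis by simp
  qed
  have "\<not> (k - 1 < k' - 1)" using *[of "k-1" "k'-1"] assms by auto
  moreover have "\<not> (k' - 1 < k - 1)" using *[of "k'-1" "k-1"] assms by auto
  ultimately have "k - 1 = k' - 1" by simp
  then show ?thesis using assms(4) by simp
qed

lemma L2:
  assumes "n \<ge> 3" "l \<in> {2..n - 1}" "k \<ge> 1"
    and "dw_edge m n ((k - 1) * (n - 1) + l) y"
  shows "y = (k - 1) * (n - 1) + l + 1"
  using assms(4) unfolding dw_edge_def
proof (elim disjE bexE conjE)
  fix k' assume "(k - 1) * (n - 1) + l = 1" then show ?thesis using assms by simp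
next
  fix k' i assume a: "k' \<in> {1..m}" "i \<in> {2..n-1}" "(k - 1) * (n - 1) + l = (k' - 1) * (n - 1) + i"
    "y = (k' - 1) * (n - 1) + i + 1"
  have "k - 1 = k' - 1 \<and> l = i" using L1[OF assms(1) _ _ a(3)] assms a by auto
  then show ?thesis using a by simp
next
  fix k' assume a: "k' \<in> {1..m}" "(k - 1) * (n - 1) + l = (k' - 1) * (n - 1) + n"
  have "k - 1 = k' - 1 \<and> l = n" using L1[OF assms(1) _ _ a(2)] assms a by auto
  then show ?thesis using assms by simp
qed

lemma L3:
  assumes "n \<ge> 3" "k \<ge> 1"
    and "dw_edge m n ((k - 1) * (n - 1) + n) y"
  shows "y = 1"
  using assms(3) unfolding dw_edge_def
proof (elim disjE bexE conjE)
  fix k' assume "(k - 1) * (n - 1) + n = 1" then show ?thesis using assms by simp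
next
  fix k' i assume a: "k' \<in> {1..m}" "i \<in> {2..n-1}" "(k - 1) * (n - 1) + n = (k' - 1) * (n - 1) + i"
    "y = (k' - 1) * (n - 1) + i + 1"
  have "k - 1 = k' - 1 \<and> n = i" using L1[OF assms(1) _ _ a(3)] assms a by auto
  then have "n = i" by simp
  then show ?thesis using a(2) assms(1) by simp
qed

lemma L4:
  assumes "n \<ge> 3" "dw_edge m n 1 y"
  shows "\<exists>k'\<in>{1..m}. y = (k' - 1) * (n - 1) + 2"
  using assms(2) assms(1) unfolding dw_edge_def by auto

lemma MS: "1 \<le> m \<Longrightarrow> (m - 1) * x + x = m * (x::nat)" by (cases m) auto

definition F :: "nat \<Rightarrow> nat \<Rightarrow> nat \<Rightarrow> nat \<Rightarrow> nat \<Rightarrow> nat" where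
  "F n k r l t = (if t \<le> n - l then (k - 1) * (n - 1) + l + t
                  else if t = n - l + 1 then 1 else (r - 1) * (n - 1) + (t - (n - l + 1)) + 1)"

lemma W:
  assumes "n \<ge> 3" "k \<in> {1..m}" "r \<in> {1..m}" "l \<in> {2..n}" "i = (k - 1) * (n - 1) + l"
    "l' \<in> {2..n}" "j = (r - 1) * (n - 1) + l'"
    and w: "dw_walk m n w" "length w - 1 = n - 1" "hd w = i" "last w = j"
  shows "l \<ge> 3 \<and> l' = l - 1 \<and> (\<forall>t<n. w ! t = F n k r l t)"
proof -
  have ne: "w \<noteq> []" and len: "length w = n" using w assms(1) unfolding dw_walk_def by auto
  have E: "\<And>t. Suc t < n \<Longrightarrow> dw_edge m n (w ! t) (w ! Suc t)" using w(1) len unfolding dw_walk_def by auto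
  have w0: "w ! 0 = i" using w(3) ne by (simp add: hd_conv_nth)
  have wl: "w ! (n - 1) = j" using w(4) ne len by (simp add: last_conv_nth)
  have A: "t \<le> n - l \<Longrightarrow> w ! t = (k - 1) * (n - 1) + l + t" for t
  proof (induction t)
    case 0 then show ?case using w0 assms by simp
  next
    case (Suc t)
    have st: "Suc t < n" "l + t \<in> {2..n - 1}" using Suc.prems assms(1,4) by auto
    have e: "dw_edge m n ((k - 1) * (n - 1) + (l + t)) (w ! Suc t)"
      using E[OF st(1)] Suc.IH Suc.prems by (simp add: add.assoc)
    have "w ! Suc t = (k - 1) * (n - 1) + (l + t) + 1"
      by (rule L2[OF assms(1) st(2) _ e]) (use assms(2) in auto)
    then show ?case by simp
  qed
  have An: "w ! (n - l) = (k - 1) * (n - 1) + n" using A[of "n - l"] assms by simp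
  have nl: "Suc (n - l) < n" using assms(1,4) by auto
  have h: "w ! (n - l + 1) = 1"
    using nl L3[OF assms(1), of k m] E[of "n - l"] An assms by auto
  have "l \<noteq> 2"
  proof
    assume "l = 2"
    then have "n - l + 1 = n - 1" using assms(1) by arith
    then show False using h wl assms by simp
  qed
  then have l3: "l \<ge> 3" using assms by auto
  have nl2: "Suc (Suc (n - l)) < n" using assms(1,4) l3 by arith
  obtain k' where k': "k' \<in> {1..m}" "w ! (n - l + 2) = (k' - 1) * (n - 1) + 2"
    using nl2 L4[OF assms(1), of m "w ! (n - l + 2)"] E[of "n - l + 1"] h l3 assms by auto
  have B: "1 \<le> s \<Longrightarrow> s \<le> l - 2 \<Longrightarrow> w ! (n - l + 1 + s) = (k' - 1) * (n - 1) + s + 1" for s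
  proof (induction s)
    case 0 then show ?case by simp
  next
    case (Suc s)
    show ?case
    proof (cases "s = 0")
      case True then show ?thesis using k' by simp
    next
      case False
      have st: "Suc (n - l + 1 + s) < n" "s + 1 \<in> {2..n - 1}" using Suc.prems False assms(1,4) l3 by auto
      have ih: "w ! (n - l + 1 + s) = (k' - 1) * (n - 1) + (s + 1)"
        using Suc.IH Suc.prems False by simp
      have e: "dw_edge m n ((k' - 1) * (n - 1) + (s + 1)) (w ! Suc (n - l + 1 + s))"
        using E[OF st(1)] ih by simp
      have "w ! Suc (n - l + 1 + s) = (k' - 1) * (n - 1) + (s + 1) + 1"
        by (rule L2[OF assms(1) st(2) _ e]) (use k' in auto)
      then show ?thesis by simp
    qed
  qed
  have "l \<le> n" using assms(4) by simp
  then have e1: "n - l + 1 + (l - 2) = n - 1" using l3 by arith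
  have e2: "(k' - 1) * (n - 1) + (l - 2) + 1 = (k' - 1) * (n - 1) + (l - 1)" using l3 by arith
  have "w ! (n - l + 1 + (l - 2)) = (k' - 1) * (n - 1) + (l - 2) + 1" using B[of "l - 2"] l3 by simp
  then have "j = (k' - 1) * (n - 1) + (l - 2) + 1" using wl e1 by (simp only: e1 wl)
  then have "j = (k' - 1) * (n - 1) + (l - 1)" using e2 by (rule trans)
  then have "(r - 1) * (n - 1) + l' = (k' - 1) * (n - 1) + (l - 1)" using assms by simp
  moreover have "l - 1 \<in> {2..n}" using l3 \<open>l \<le> n\<close> by auto
  ultimately have kk0: "r - 1 = k' - 1 \<and> l' = l - 1" using L1[OF assms(1) assms(6)] by blast
  then have kk: "r - 1 = k' - 1" "l' = l - 1" by auto
  have "\<forall>t<n. w ! t = F n k r l t"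
  proof (intro allI impI)
    fix t assume "t < n"
    consider "t \<le> n - l" | "t = n - l + 1" | "n - l + 1 < t" by linarith
    then show "w ! t = F n k r l t"
    proof cases
      case 1 then show ?thesis using A unfolding F_def by simp
    next
      case 2 then show ?thesis using h unfolding F_def by simp
    next
      case 3
      define s where "s = t - (n - l + 1)"
      have s: "1 \<le> s" "s \<le> l - 2" "t = n - l + 1 + s" using 3 \<open>t < n\<close> l3 \<open>l \<le> n\<close> unfolding s_def by arith+
      then show ?thesis using B[OF s(1,2)] kk unfolding F_def by simp
    qed
  qed
  then show ?thesis using l3 kk by simp
qed


theorem lemma2p2:
  fixes m n k r i j :: nat
  assumes "m \<ge> 1" and "n \<ge> 3"
    and "k \<in> {1..m}" and "r \<in> {1..m}" and "k \<noteq> r"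
    and "i \<in> dw_block n k - {1}" and "j \<in> dw_block n r - {1}"
  shows "((\<exists>w. dw_walk m n w \<and> length w - 1 = n - 1 \<and> hd w = i \<and> last w = j)
          \<longleftrightarrow> (\<exists>l\<in>{3..n}. i = (k - 1) * (n - 1) + l \<and> j = (r - 1) * (n - 1) + (l - 1)))
       \<and> ((\<exists>w. dw_walk m n w \<and> length w - 1 = n - 1 \<and> hd w = i \<and> last w = j)
          \<longrightarrow> (\<exists>!w. dw_walk m n w \<and> length w - 1 = n - 1 \<and> hd w = i \<and> last w = j))"
proof -
  obtain l where l: "l \<in> {2..n}" "i = (k - 1) * (n - 1) + l"
    using assms(6) unfolding dw_block_def by auto
  obtain l' where l': "l' \<in> {2..n}" "j = (r - 1) * (n - 1) + l'"
    using assms(7) unfolding dw_block_def by auto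
  let ?P = "\<lambda>w. dw_walk m n w \<and> length w - 1 = n - 1 \<and> hd w = i \<and> last w = j"
  have fwd: "?P w \<Longrightarrow> l \<ge> 3 \<and> l' = l - 1 \<and> (\<forall>t<n. w ! t = F n k r l t)" for w
    using W[OF assms(2) assms(3) assms(4) l l'] by blast
  have lenP: "?P w \<Longrightarrow> length w = n" for w using assms(2) unfolding dw_walk_def by auto
  have uniq: "?P w \<Longrightarrow> ?P w' \<Longrightarrow> w = w'" for w w'
    apply (rule nth_equalityI)
    using lenP[of w] lenP[of w'] fwd[of w] fwd[of w'] by auto
  have bwd: "l \<ge> 3 \<Longrightarrow> l' = l - 1 \<Longrightarrow> ?P (map (F n k r l) [0..<n])"
  proof -
    assume l3: "l \<ge> 3" and ll: "l' = l - 1"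
    let ?w = "map (F n k r l) [0..<n]"
    have bk: "(k - 1) * (n - 1) + n \<le> m * (n - 1) + 1"
    proof -
      have a1: "(k - 1) * (n - 1) \<le> (m - 1) * (n - 1)" using assms(3) by (intro mult_le_mono1) auto
      have a2: "(m - 1) * (n - 1) + (n - 1) = m * (n - 1)" using MS[OF assms(1)] .
      have a3: "n = (n - 1) + 1" using assms(2) by simp
      show ?thesis using a1 a2 a3 by linarith
    qed
    have br: "(r - 1) * (n - 1) + n \<le> m * (n - 1) + 1"
    proof -
      have a1: "(r - 1) * (n - 1) \<le> (m - 1) * (n - 1)" using assms(4) by (intro mult_le_mono1) auto
      have a2: "(m - 1) * (n - 1) + (n - 1) = m * (n - 1)" using MS[OF assms(1)] .
      have a3: "n = (n - 1) + 1" using assms(2) by simp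
      show ?thesis using a1 a2 a3 by linarith
    qed
    have vert: "t < n \<Longrightarrow> F n k r l t \<in> dw_vertices m n" for t
    proof -
      assume t: "t < n"
      have ln: "l \<le> n" using l(1) by simp
      have "F n k r l t \<ge> 1 \<and> F n k r l t \<le> m * (n - 1) + 1"
      proof (cases "t \<le> n - l")
        case True
        then have "l + t \<le> n" using ln by arith
        then show ?thesis using True bk l3 unfolding F_def by simp
      next
        case False
        show ?thesis
        proof (cases "t = n - l + 1")
          case True then show ?thesis using False unfolding F_def by simp
        next
          case False2: False
          have "t - (n - l + 1) + 1 \<le> n" using t by arith
          moreover have "F n k r l t = (r - 1) * (n - 1) + (t - (n - l + 1) + 1)"
            using False False2 unfolding F_def by simp
          ultimately show ?thesis using br by linarith
        qed
      qed
      then show ?thesis unfolding dw_vertices_def by simp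
    qed
    have edge: "Suc t < n \<Longrightarrow> dw_edge m n (F n k r l t) (F n k r l (Suc t))" for t
    proof -
      assume t: "Suc t < n"
      consider "Suc t \<le> n - l" | "t = n - l" | "Suc t = n - l + 1 + 1" | "t > n - l + 1"
        by linarith
      then show ?thesis
      proof cases
        case 1 then show ?thesis unfolding F_def dw_edge_def using assms(3) l
          by (intro disjI2 disjI1 bexI[of _ k] bexI[of _ "l + t"]) auto
      next
        case 2 then show ?thesis unfolding F_def dw_edge_def using assms(3) l
          by (intro disjI2 bexI[of _ k]) auto
      next
        case 3 then show ?thesis unfolding F_def dw_edge_def using assms(4) l l3
          by (intro disjI1 bexI[of _ r]) auto
      next
        case 4 then show ?thesis unfolding F_def dw_edge_def using assms(4) l l3 t
          by (intro disjI2 disjI1 bexI[of _ r] bexI[of _ "t - (n - l + 1) + 1"]) auto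
      qed
    qed
    have ww: "dw_walk m n ?w" unfolding dw_walk_def using assms(2) vert edge by auto
    have hdw: "hd ?w = i" using assms(2) l by (simp add: hd_map F_def hd_upt)
    have ln: "l \<le> n" using l(1) by simp
    have c1: "\<not> n - 1 \<le> n - l" "n - 1 \<noteq> n - l + 1" using l3 ln by arith+
    have c2: "n - 1 - (n - l + 1) + 1 = l - 1" using l3 ln by arith
    have f: "F n k r l (n - 1) = (r - 1) * (n - 1) + (l - 1)"
      by (simp only: F_def c1 if_False add.assoc c2)
    have "last ?w = F n k r l (n - 1)" using assms(2) by (simp add: last_map)
    moreover have "j = (r - 1) * (n - 1) + (l - 1)" using l' ll by simp
    ultimately have "last ?w = j" using f by simp
    then show ?thesis using hdw ww by simp
  qed
  have iff: "(\<exists>w. ?P w) \<longleftrightarrow> (\<exists>l\<in>{3..n}. i = (k - 1) * (n - 1) + l \<and> j = (r - 1) * (n - 1) + (l - 1))"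
  proof
    assume "\<exists>w. ?P w" then obtain w where "?P w" by blast
    then show "\<exists>l\<in>{3..n}. i = (k - 1) * (n - 1) + l \<and> j = (r - 1) * (n - 1) + (l - 1)"
      using fwd[of w] l l' by auto
  next
    assume "\<exists>l\<in>{3..n}. i = (k - 1) * (n - 1) + l \<and> j = (r - 1) * (n - 1) + (l - 1)"
    then obtain l2 where l2: "l2 \<in> {3..n}" "i = (k - 1) * (n - 1) + l2" "j = (r - 1) * (n - 1) + (l2 - 1)" by blast
    have "l2 = l" using l l2 by simp
    moreover have "l' = l2 - 1" using l' l2 L1[OF assms(2) l'(1), of r r "l2 - 1"] by auto
    ultimately have "?P (map (F n k r l) [0..<n])" using bwd l2 by auto
    then show "\<exists>w. ?P w" by blast
  qed
  show ?thesis using iff uniq by blast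
qed

end
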